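(* For every nonempty finite $W\subseteq\mathbb{N}$ with $l(W)=l$, $$\left(\frac{2l}{2l-1}\right)^{h(W)-1}\le |W|.$$
   Context: $\mathbb{N}=\{0,1,2,\ldots\}$. For a set $W$ of integers, $l(W)$ is the maximum number of consecutive integers contained in $W$. For a finite $L\subseteq\mathbb{N}$ and an integer $r$, write $L+r:=\{x+r: x\in L,\ x+r\ge 0\}$. Define $h$ on finite subsets of $\mathbb{N}$ recursively on $|L|$: $h(\emptyset)=0$, and for $L\neq\emptyset$, $$h(L)=1+\max\Big\{h(L\cap(L+1)),\ \max_{M\in T(L)}\min\{h(L\cap M),\,h(L\cap(M-1))\}\Big\},$$ where $T(L)$ is the set of all finite $M\subseteq\mathbb{N}$ with $M\notin\{L,L+1\}$ and $0<|M|\le|L|$. *)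

theory Defs
  imports Complex_Main
begin

definition shift :: "nat set \<Rightarrow> int \<Rightarrow> nat set" where
  "shift L r = {nat (int x + r) | x. x \<in> L \<and> int x + r \<ge> 0}"

definition lrun :: "nat set \<Rightarrow> nat" where
  "lrun W = Max {k. \<exists>a. {a..<a+k} \<subseteq> W}"

definition Tset :: "nat set \<Rightarrow> nat set set" where
  "Tset L = {M. finite M \<and> M \<noteq> L \<and> M \<noteq> shift L 1 \<and> 0 < card M \<and> card M \<le> card L}"

lemma finite_shift: "finite L \<Longrightarrow> finite (shift L r)"
proof -
  assume "finite L"
  have "shift L r \<subseteq> (\<lambda>x. nat (int x + r)) ` L" unfolding shift_def by auto
  thus ?thesis using \<open>finite L\<close> finite_subset by blast
qed

lemma shift_plus1: "shift L 1 = (\<lambda>x. x + 1) ` L"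
  unfolding shift_def by force

lemma shift_minus1_iff: "x \<in> shift M (-1) \<longleftrightarrow> x + 1 \<in> M"
proof
  assume "x \<in> shift M (-1)"
  then obtain y where "y \<in> M" "int y - 1 \<ge> 0" "x = nat (int y - 1)"
    unfolding shift_def by auto
  hence "y = x + 1" by linarith
  thus "x + 1 \<in> M" using \<open>y \<in> M\<close> by simp
next
  assume "x + 1 \<in> M"
  thus "x \<in> shift M (-1)" unfolding shift_def
    by (intro CollectI exI[of _ "x+1"]) auto
qed

lemma term1: "finite L \<Longrightarrow> L \<noteq> {} \<Longrightarrow> card (L \<inter> shift L 1) < card L"
proof -
  assume f: "finite L" and ne: "L \<noteq> {}"
  have "Min L \<in> L" using f ne by simp
  moreover have "Min L \<notin> shift L 1"
    unfolding shift_plus1 using f Min_le by fastforce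
  ultimately have "L \<inter> shift L 1 \<subset> L" by blast
  thus ?thesis using f psubset_card_mono by blast
qed

lemma term2: "finite L \<Longrightarrow> M \<in> Tset L \<Longrightarrow> card (L \<inter> M) < card L"
proof -
  assume f: "finite L" and M: "M \<in> Tset L"
  have "L \<inter> M \<subset> L"
  proof (rule ccontr)
    assume "\<not> L \<inter> M \<subset> L"
    hence "L \<subseteq> M" by blast
    moreover have "finite M" "card M \<le> card L" using M unfolding Tset_def by auto
    ultimately have "card L = card M" using card_mono by (metis le_antisym)
    hence "L = M" using card_subset_eq \<open>L \<subseteq> M\<close> \<open>finite M\<close> by blast
    thus False using M unfolding Tset_def by blast
  qed
  thus ?thesis using f psubset_card_mono by blast
qed

lemma term3: "finite L \<Longrightarrow> M \<in> Tset L \<Longrightarrow> card (L \<inter> shift M (-1)) < card L"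
proof -
  assume f: "finite L" and M: "M \<in> Tset L"
  have "L \<inter> shift M (-1) \<subset> L"
  proof (rule ccontr)
    assume "\<not> L \<inter> shift M (-1) \<subset> L"
    hence "L \<subseteq> shift M (-1)" by blast
    hence sub: "shift L 1 \<subseteq> M" unfolding shift_plus1 using shift_minus1_iff by blast
    have "card (shift L 1) = card L" unfolding shift_plus1 by (simp add: card_image)
    moreover have "finite M" "card M \<le> card L" using M unfolding Tset_def by auto
    ultimately have "card (shift L 1) = card M" using sub card_mono by (metis le_antisym)
    hence "shift L 1 = M" using card_subset_eq sub \<open>finite M\<close> by blast
    thus False using M unfolding Tset_def by blast
  qed
  thus ?thesis using f psubset_card_mono by blast
qed

text \<open>The function h, defined by recursion on |L| (the recursive calls are on strictly
smaller subsets of L). The value on infinite sets is irrelevant (set to 0).\<close>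
function h :: "nat set \<Rightarrow> nat" where
  "h L = (if L = {} \<or> infinite L then 0 else
     1 + Max (insert (h (L \<inter> shift L 1))
                ((\<lambda>M. min (h (L \<inter> M)) (h (L \<inter> shift M (-1)))) ` Tset L)))"
  by auto
termination
  apply (relation "measure card")
  apply (auto intro: term1 term2 term3)
  done

end

theory Submission
  imports Defs
begin

declare h.simps[simp del]

lemma mem_shift1: "x \<in> shift L 1 \<longleftrightarrow> (0 < x \<and> x - 1 \<in> L)"
  unfolding shift_plus1 by (cases x) auto

lemma lrun_set_fin: "finite (L::nat set) \<Longrightarrow> finite {k. \<exists>a. {a..<a+k} \<subseteq> L}"
proof -
  assume f: "finite L"
  have "{k. \<exists>a. {a..<a+k} \<subseteq> L} \<subseteq> {..card L}"
  proof
    fix k assume "k \<in> {k. \<exists>a. {a..<a+k} \<subseteq> L}"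
    then obtain a where "{a..<a+k} \<subseteq> L" by auto
    hence "card {a..<a+k} \<le> card L" using f card_mono by blast
    thus "k \<in> {..card L}" by simp
  qed
  thus ?thesis using finite_subset by blast
qed

lemma lrun_ge: "finite L \<Longrightarrow> {a..<a+k} \<subseteq> L \<Longrightarrow> k \<le> lrun L"
  unfolding lrun_def by (rule Max_ge) (auto simp: lrun_set_fin)

lemma lrun_pos: "finite L \<Longrightarrow> L \<noteq> {} \<Longrightarrow> 1 \<le> lrun L"
proof -
  assume f: "finite L" and "L \<noteq> {}"
  then obtain x where "x \<in> L" by auto
  hence "{x..<x+1} \<subseteq> L" by auto
  thus ?thesis using lrun_ge f by blast
qed

lemma lrun_mono: "finite B \<Longrightarrow> A \<subseteq> B \<Longrightarrow> lrun A \<le> lrun B"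
proof -
  assume f: "finite B" and s: "A \<subseteq> B"
  have "{k. \<exists>a. {a..<a+k} \<subseteq> A} \<subseteq> {k. \<exists>a. {a..<a+k} \<subseteq> B}" using s by blast
  moreover have "{k. \<exists>a. {a..<a+k} \<subseteq> A} \<noteq> {}"
  proof -
    have "(0::nat) \<in> {k. \<exists>a. {a..<a+k} \<subseteq> A}" by simp
    thus ?thesis by blast
  qed
  ultimately show ?thesis unfolding lrun_def using lrun_set_fin[OF f] by (rule Max_mono)
qed

lemma h_empty: "h {} = 0" by (subst h.simps) simp

lemma cover: "\<forall>x. x \<in> L \<longrightarrow> (\<exists>s\<in>L - shift L 1. s \<le> x \<and> {s..x} \<subseteq> L)"
proof
  fix x show "x \<in> L \<longrightarrow> (\<exists>s\<in>L - shift L 1. s \<le> x \<and> {s..x} \<subseteq> L)"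
  proof (induction x)
    case 0
    then show ?case by (auto simp: mem_shift1)
  next
    case (Suc n)
    show ?case
    proof
      assume a: "Suc n \<in> L"
      show "\<exists>s\<in>L - shift L 1. s \<le> Suc n \<and> {s..Suc n} \<subseteq> L"
      proof (cases "Suc n \<in> shift L 1")
        case True
        hence "n \<in> L" by (simp add: mem_shift1)
        with Suc obtain s where "s \<in> L - shift L 1" "s \<le> n" "{s..n} \<subseteq> L" by auto
        moreover have "{s..Suc n} = insert (Suc n) {s..n}" using \<open>s \<le> n\<close> by auto
        ultimately show ?thesis using a by (intro bexI[of _ s]) auto
      next
        case False
        then show ?thesis using a by auto
      qed
    qed
  qed
qed

lemma key: "finite L \<Longrightarrow> lrun L * card (L \<inter> shift L 1) + card L \<le> lrun L * card L"
proof -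
  assume f: "finite L"
  define S where "S = L - shift L 1"
  define l where "l = lrun L"
  have sub: "L \<subseteq> (\<Union>s\<in>S. {s..<s+l})"
  proof
    fix x assume "x \<in> L"
    then obtain s where s: "s \<in> S" "s \<le> x" "{s..x} \<subseteq> L" using cover S_def by blast
    have "{s..<s + (Suc x - s)} = {s..x}" using s(2) by auto
    hence "Suc x - s \<le> l" using lrun_ge[OF f] s(3) l_def by metis
    thus "x \<in> (\<Union>s\<in>S. {s..<s+l})" using s by auto
  qed
  have fS: "finite S" using f S_def by auto
  have "card L \<le> card (\<Union>s\<in>S. {s..<s+l})" using sub fS by (intro card_mono) auto
  also have "\<dots> \<le> (\<Sum>s\<in>S. card {s..<s+l})" using fS by (rule card_UN_le)
  also have "\<dots> = l * card S" by simp
  finally have c1: "card L \<le> l * card S" .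
  have "S = L - (L \<inter> shift L 1)" using S_def by auto
  hence "card S + card (L \<inter> shift L 1) = card L"
    using f by (metis Int_lower1 card_Diff_subset finite_Int le_add_diff_inverse2 card_mono)
  hence "l * card S + l * card (L \<inter> shift L 1) = l * card L"
    by (metis add_mult_distrib2)
  hence "l * card (L \<inter> shift L 1) + card L \<le> l * card L" using c1 by linarith
  thus ?thesis using l_def by simp
qed

lemma sumAB: "finite L \<Longrightarrow> finite M \<Longrightarrow>
  card (L \<inter> M) + card (L \<inter> shift M (-1)) \<le> card M + card (L \<inter> shift L 1)"
proof -
  assume f: "finite L" and fM: "finite M"
  have "L \<inter> shift M (-1) = (\<lambda>x. x - 1) ` (shift L 1 \<inter> M)"
  proof
    show "L \<inter> shift M (-1) \<subseteq> (\<lambda>x. x - 1) ` (shift L 1 \<inter> M)"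
    proof
      fix x assume "x \<in> L \<inter> shift M (-1)"
      hence "x + 1 \<in> shift L 1 \<inter> M" by (auto simp: shift_minus1_iff mem_shift1)
      thus "x \<in> (\<lambda>x. x - 1) ` (shift L 1 \<inter> M)" by (intro image_eqI[of _ _ "x+1"]) auto
    qed
    show "(\<lambda>x. x - 1) ` (shift L 1 \<inter> M) \<subseteq> L \<inter> shift M (-1)"
      by (auto simp: shift_minus1_iff mem_shift1)
  qed
  hence "card (L \<inter> shift M (-1)) \<le> card (shift L 1 \<inter> M)"
    using fM by (simp add: card_image_le)
  moreover have "card (L \<inter> M) + card (shift L 1 \<inter> M) =
      card ((L \<inter> M) \<union> (shift L 1 \<inter> M)) + card ((L \<inter> M) \<inter> (shift L 1 \<inter> M))"
    using fM by (intro card_Un_Int) auto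
  moreover have "card ((L \<inter> M) \<union> (shift L 1 \<inter> M)) \<le> card M"
    using fM by (intro card_mono) auto
  moreover have "card ((L \<inter> M) \<inter> (shift L 1 \<inter> M)) \<le> card (L \<inter> shift L 1)"
    using f by (intro card_mono) auto
  ultimately show ?thesis by linarith
qed

lemma h_cases:
  assumes f: "finite L" and ne: "L \<noteq> {}"
  shows "h L \<ge> 1 \<and> (h L - 1 = h (L \<inter> shift L 1) \<or>
     (\<exists>M\<in>Tset L. h L - 1 = min (h (L \<inter> M)) (h (L \<inter> shift M (-1)))))"
proof -
  define X where "X = insert (h (L \<inter> shift L 1))
                ((\<lambda>M. min (h (L \<inter> M)) (h (L \<inter> shift M (-1)))) ` Tset L)"
  have hL: "h L = 1 + Max X" unfolding X_def using f ne by (subst h.simps) simp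
  have "(\<lambda>M. min (h (L \<inter> M)) (h (L \<inter> shift M (-1)))) ` Tset L
     \<subseteq> (\<lambda>(A,B). min (h A) (h B)) ` (Pow L \<times> Pow L)"
  proof
    fix y assume "y \<in> (\<lambda>M. min (h (L \<inter> M)) (h (L \<inter> shift M (-1)))) ` Tset L"
    then obtain M where "y = min (h (L \<inter> M)) (h (L \<inter> shift M (-1)))" by auto
    thus "y \<in> (\<lambda>(A,B). min (h A) (h B)) ` (Pow L \<times> Pow L)"
      by (intro image_eqI[of _ _ "(L \<inter> M, L \<inter> shift M (-1))"]) auto
  qed
  moreover have "finite ((\<lambda>(A,B). min (h A) (h B)) ` (Pow L \<times> Pow L))" using f by simp
  ultimately have "finite X" unfolding X_def by (meson finite_insert finite_subset)
  hence "Max X \<in> X" by (intro Max_in) (auto simp: X_def)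
  thus ?thesis using hL unfolding X_def by auto
qed

definition rr :: "nat \<Rightarrow> real" where "rr l = 2 * real l / (2 * real l - 1)"

lemma rr_ge1: "1 \<le> l \<Longrightarrow> 1 \<le> rr l"
  unfolding rr_def by (simp add: field_simps)

lemma rr_anti: "1 \<le> l1 \<Longrightarrow> l1 \<le> l2 \<Longrightarrow> rr l2 \<le> rr l1"
proof -
  assume a: "1 \<le> l1" "l1 \<le> l2"
  hence p1: "2 * real l1 - 1 > 0" "2 * real l2 - 1 > 0" by auto
  have "2 * real l2 * (2 * real l1 - 1) \<le> 2 * real l1 * (2 * real l2 - 1)"
    using a by (simp add: algebra_simps)
  thus ?thesis unfolding rr_def using p1 by (simp add: divide_simps)
qed

lemma main: "finite W \<Longrightarrow> W \<noteq> {} \<Longrightarrow> rr (lrun W) ^ (h W - 1) \<le> real (card W)"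
proof (induction "card W" arbitrary: W rule: less_induct)
  case less
  note f = less.prems(1) and ne = less.prems(2)
  define l where "l = lrun W"
  define r where "r = rr l"
  have l1: "1 \<le> l" using lrun_pos f ne l_def by auto
  have r1: "1 \<le> r" using rr_ge1 l1 r_def by auto
  have rl: "r * (2 * real l - 1) = 2 * real l" unfolding r_def rr_def using l1 by simp
  define L' where "L' = W \<inter> shift W 1"
  have keyr: "real l * card L' + card W \<le> real l * card W"
    using key[OF f] unfolding l_def L'_def by (metis of_nat_add of_nat_le_iff of_nat_mult)
  have IH: "rr (lrun A) ^ (h A - 1) \<le> real (card A) \<Longrightarrow> r ^ (h A - 1) \<le> real (card A)"
    if "A \<subseteq> W" "A \<noteq> {}" for A
  proof -
    assume a: "rr (lrun A) ^ (h A - 1) \<le> real (card A)"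
    have fA: "finite A" using that f finite_subset by blast
    have "r \<le> rr (lrun A)" unfolding r_def l_def
      using rr_anti lrun_pos[OF fA that(2)] lrun_mono[OF f that(1)] by blast
    hence "r ^ (h A - 1) \<le> rr (lrun A) ^ (h A - 1)" using r1 by (intro power_mono) auto
    thus ?thesis using a by linarith
  qed
  have IH2: "r ^ (h A - 1) \<le> real (card A) \<and> 1 \<le> h A \<and> finite A" if "A \<subseteq> W" "A \<noteq> {}" "card A < card W" for A
  proof -
    have fA: "finite A" using that f finite_subset by blast
    show ?thesis using IH[OF that(1,2)] less.hyps[OF that(3) fA that(2)] h_cases[OF fA that(2)] fA
      by auto
  qed
  show ?case unfolding l_def[symmetric] r_def[symmetric]
  proof -
    have hc: "h W - 1 = h L' \<or> (\<exists>M\<in>Tset W. h W - 1 = min (h (W \<inter> M)) (h (W \<inter> shift M (-1))))"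
      using h_cases[OF f ne] L'_def by auto
    then show "r ^ (h W - 1) \<le> real (card W)"
    proof
      assume e: "h W - 1 = h L'"
      show ?thesis
      proof (cases "L' = {}")
        case True
        then show ?thesis using e ne f by (simp add: h_empty Suc_le_eq card_gt_0_iff)
      next
        case False
        have c: "card L' < card W" using term1[OF f ne] L'_def by simp
        have i: "r ^ (h L' - 1) \<le> real (card L')" "1 \<le> h L'"
          using IH2[OF _ False c] L'_def by auto
        have "r ^ (h W - 1) = r * r ^ (h L' - 1)" using e i(2)
          by (metis Suc_diff_le diff_Suc_1 power_Suc)
        also have "\<dots> \<le> r * card L'" using i r1 by (intro mult_left_mono) auto
        also have "\<dots> \<le> card W"
        proof -
          have "(r * card L') * (2 * real l - 1) = card L' * (r * (2 * real l - 1))"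
            by (simp add: ac_simps)
          also have "\<dots> = 2 * (real l * card L')" using rl by simp
          also have "\<dots> \<le> (2 * real l - 1) * card W" using keyr by (simp add: algebra_simps)
          finally have X: "(r * card L') * (2 * real l - 1) \<le> (2 * real l - 1) * card W" .
          have p: "0 < 2 * real l - 1" using l1 by simp
          show ?thesis using X p by (metis mult.commute mult_le_cancel_right_pos)
        qed
        finally show ?thesis .
      qed
    next
      assume "\<exists>M\<in>Tset W. h W - 1 = min (h (W \<inter> M)) (h (W \<inter> shift M (-1)))"
      then obtain M where M: "M \<in> Tset W" and e: "h W - 1 = min (h (W \<inter> M)) (h (W \<inter> shift M (-1)))"
        by blast
      define A where "A = W \<inter> M"
      define B where "B = W \<inter> shift M (-1)"
      show ?thesis
      proof (cases "A = {} \<or> B = {}")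
        case True
        then show ?thesis using e ne f A_def B_def by (auto simp: h_empty Suc_le_eq card_gt_0_iff)
      next
        case False
        have iA: "r ^ (h A - 1) \<le> real (card A)" "1 \<le> h A"
          using IH2[of A] False term2[OF f M] A_def by auto
        have iB: "r ^ (h B - 1) \<le> real (card B)" "1 \<le> h B"
          using IH2[of B] False term3[OF f M] B_def by auto
        define m where "m = min (h A) (h B)"
        have m1: "1 \<le> m" using iA iB m_def by auto
        have pA: "r ^ (m - 1) \<le> card A"
          using power_increasing[of "m-1" "h A - 1" r] r1 m_def iA by linarith
        have pB: "r ^ (m - 1) \<le> card B"
          using power_increasing[of "m-1" "h B - 1" r] r1 m_def iB by linarith
        have fM: "finite M" and cM: "card M \<le> card W" using M unfolding Tset_def by auto
        have sAB: "card A + card B \<le> card W + card L'"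
          using sumAB[OF f fM] cM A_def B_def L'_def by simp
        have "r ^ (h W - 1) = r * r ^ (m - 1)" using e m1 m_def A_def B_def
          by (metis Suc_diff_le diff_Suc_1 power_Suc)
        also have "\<dots> \<le> r * ((card A + card B) / 2)" using pA pB r1
          by (intro mult_left_mono) auto
        also have "\<dots> \<le> card W"
        proof -
          have sr: "real (card A) + card B \<le> card W + card L'" using sAB by linarith
          have "(r * ((card A + card B) / 2)) * (2 * real l - 1) = ((card A + card B) / 2) * (r * (2 * real l - 1))"
            by (simp add: ac_simps)
          also have "\<dots> = real l * (card A + card B)" using rl by simp
          also have "\<dots> \<le> real l * (card W + card L')" using sr by (intro mult_left_mono) auto
          also have "\<dots> \<le> (2 * real l - 1) * card W" using keyr by (simp add: algebra_simps)
          finally have X: "(r * ((card A + card B) / 2)) * (2 * real l - 1) \<le> (2 * real l - 1) * card W" .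
          have p: "0 < 2 * real l - 1" using l1 by simp
          show ?thesis using X p by (metis mult.commute mult_le_cancel_right_pos)
        qed
        finally show ?thesis .
      qed
    qed
  qed
qed

theorem mainTheorem6:
  fixes W :: "nat set" and l :: nat
  assumes "finite W" and "W \<noteq> {}" and "lrun W = l"
  shows "((2 * real l) / (2 * real l - 1)) ^ (h W - 1) \<le> real (card W)"
  using main[OF assms(1,2)] assms(3) unfolding rr_def by simp

end
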